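(* Let an $m$-stage explicit Runge--Kutta method with coefficients $(A,b)$ and step-size coefficient $\gamma=\gamma(A,b)$ be given. Consider a problem of the form $$u_k'(t)=q_k(u(t),t)\,\frac{u_{k-1}(t)-u_k(t)}{\Delta x},\quad k=1,\dots,N,\qquad u_0:=u_N,\qquad u_k(t_0)=u_k^0,$$ with $N\ge1$, $\Delta x>0$, real initial data $u^0\in\mathbb{R}^N$ and functions $q_k:\mathbb{R}^N\times\mathbb{R}\to\mathbb{R}$. Suppose the time step $\Delta t$ and the mesh width $\Delta x$ are chosen so that $$0\le \Delta t\,\frac{q_k(u,t)}{\Delta x}\le\gamma,\qquad k=1,\dots,N,$$ for all values $u,t$. Let $u_{\max}=\max_k u_k^0$ and $u_{\min}=\min_k u_k^0$. Then the numerical solution $u^n$ produced by the Runge--Kutta method applied to this problem satisfies $u^n_k\in[u_{\min},u_{\max}]$ for all $k$ and all $n\ge0$.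
   Context: An explicit Runge--Kutta (ERK) method with $m$ stages is given by a strictly lower-triangular matrix $A=(a_{ij})\in\mathbb{R}^{m\times m}$ and a vector $b\in\mathbb{R}^m$; its nodes are $c_i=\sum_j a_{ij}$. Applied to the ODE system above with step $\Delta t$ and $t_n=t_0+n\Delta t$, one step from $u^n\in\mathbb{R}^N$ is $$y^i_k=u^n_k+\sum_{j=1}^{i-1}a_{ij}\xi^j_k\,(y^j_{k-1}-y^j_k),\ i=1,\dots,m,\qquad u^{n+1}_k=u^n_k+\sum_{i=1}^m b_i\xi^i_k\,(y^i_{k-1}-y^i_k),$$ with $\xi^j_k=\frac{\Delta t}{\Delta x}q_k(y^j,t_n+c_j\Delta t)$ and indices taken periodically ($y_0:=y_N$). Positivity polynomials: treat the $\xi^j_\ell$ ($1\le j\le m$, $\ell\in\mathbb{Z}$) as independent variables and apply the same recursion formally on the infinite grid $\ell\in\mathbb{Z}$; then $u^{n+1}_k=\sum_{i=0}^m P_i(\xi)\,u^n_{k-i}$, where $P_0,\dots,P_m$ are polynomials in the $m(m+1)/2$ variables $\xi^j_\ell$, $1\le j\le m$, $k-(m-j)\le\ell\le k$, which (written in terms of the relative variables $\xi^j_{k-s}$) depend only on $(A,b)$ and not on $k$. The (positivity) step-size coefficient is $$\gamma(A,b):=\sup\{\delta\ge0:\ P_i(\xi)\ge0\ \text{for each }0\le i\le m\text{ and all }\xi\in[0,\delta]^{m(m+1)/2}\},$$ with $\gamma(A,b):=0$ if this set is empty. *)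

theory Defs
  imports Complex_Main "HOL-Library.Extended_Real"
begin

text \<open>An explicit RK method with m stages: coefficients A i j (only 1 \<le> j < i \<le> m are used,
  i.e. A is strictly lower triangular), weights b i (1 \<le> i \<le> m).\<close>

definition rk_node :: "(nat \<Rightarrow> nat \<Rightarrow> real) \<Rightarrow> nat \<Rightarrow> real" where
  "rk_node A i = (\<Sum>j\<in>{1..<i}. A i j)"

text \<open>Formal recursion on the infinite grid Z with independent variables xi j l
  (stage j, grid point l).\<close>

fun inf_stage :: "(nat \<Rightarrow> nat \<Rightarrow> real) \<Rightarrow> (nat \<Rightarrow> int \<Rightarrow> real) \<Rightarrow> (int \<Rightarrow> real)
                   \<Rightarrow> nat \<Rightarrow> int \<Rightarrow> real" where
  "inf_stage A xi u i = (\<lambda>l. u l + (\<Sum>j\<in>{1..<i}. A i j * xi j l *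
        (inf_stage A xi u j (l - 1) - inf_stage A xi u j l)))"

definition inf_step :: "(nat \<Rightarrow> nat \<Rightarrow> real) \<Rightarrow> (nat \<Rightarrow> real) \<Rightarrow> nat \<Rightarrow> (nat \<Rightarrow> int \<Rightarrow> real)
                   \<Rightarrow> (int \<Rightarrow> real) \<Rightarrow> int \<Rightarrow> real" where
  "inf_step A b m xi u = (\<lambda>l. u l + (\<Sum>i\<in>{1..m}. b i * xi i l *
        (inf_stage A xi u i (l - 1) - inf_stage A xi u i l)))"

text \<open>Positivity polynomial P_i(xi): coefficient of u_{k-i} in u^{n+1}_k (taken at k = 0),
  obtained by evaluating the (linear in u) step on the unit vector at grid point -i.\<close>

definition pos_poly :: "(nat \<Rightarrow> nat \<Rightarrow> real) \<Rightarrow> (nat \<Rightarrow> real) \<Rightarrow> nat \<Rightarrow> (nat \<Rightarrow> int \<Rightarrow> real)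
                   \<Rightarrow> nat \<Rightarrow> real" where
  "pos_poly A b m xi i = inf_step A b m xi (\<lambda>l. if l = - int i then 1 else 0) 0"

definition sscoef_set :: "(nat \<Rightarrow> nat \<Rightarrow> real) \<Rightarrow> (nat \<Rightarrow> real) \<Rightarrow> nat \<Rightarrow> real set" where
  "sscoef_set A b m = {\<delta>. \<delta> \<ge> 0 \<and>
      (\<forall>xi. (\<forall>j l. 0 \<le> xi j l \<and> xi j l \<le> \<delta>) \<longrightarrow> (\<forall>i\<le>m. pos_poly A b m xi i \<ge> 0))}"

definition step_size_coef :: "(nat \<Rightarrow> nat \<Rightarrow> real) \<Rightarrow> (nat \<Rightarrow> real) \<Rightarrow> nat \<Rightarrow> ereal" where
  "step_size_coef A b m = (if sscoef_set A b m = {} then 0 else Sup (ereal ` sscoef_set A b m))"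

text \<open>The actual scheme on the periodic grid 1..N. Vectors in R^N are functions nat \<Rightarrow> real
  that vanish outside {1..N}.\<close>

definition prev_idx :: "nat \<Rightarrow> nat \<Rightarrow> nat" where
  "prev_idx N k = (if k = 1 then N else k - 1)"

definition is_vec :: "nat \<Rightarrow> (nat \<Rightarrow> real) \<Rightarrow> bool" where
  "is_vec N u \<longleftrightarrow> (\<forall>k. k \<notin> {1..N} \<longrightarrow> u k = 0)"

fun rk_stage :: "(nat \<Rightarrow> nat \<Rightarrow> real) \<Rightarrow> (nat \<Rightarrow> (nat \<Rightarrow> real) \<Rightarrow> real \<Rightarrow> real) \<Rightarrow> nat
                 \<Rightarrow> real \<Rightarrow> real \<Rightarrow> real \<Rightarrow> (nat \<Rightarrow> real) \<Rightarrow> nat \<Rightarrow> nat \<Rightarrow> real" where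
  "rk_stage A q N dx dt t u i = (\<lambda>k. if k \<in> {1..N} then
      u k + (\<Sum>j\<in>{1..<i}. A i j * (dt / dx * q k (rk_stage A q N dx dt t u j) (t + rk_node A j * dt)) *
          (rk_stage A q N dx dt t u j (prev_idx N k) - rk_stage A q N dx dt t u j k))
      else 0)"

definition rk_step :: "(nat \<Rightarrow> nat \<Rightarrow> real) \<Rightarrow> (nat \<Rightarrow> real) \<Rightarrow> nat
                 \<Rightarrow> (nat \<Rightarrow> (nat \<Rightarrow> real) \<Rightarrow> real \<Rightarrow> real) \<Rightarrow> nat
                 \<Rightarrow> real \<Rightarrow> real \<Rightarrow> real \<Rightarrow> (nat \<Rightarrow> real) \<Rightarrow> nat \<Rightarrow> real" where
  "rk_step A b m q N dx dt t u = (\<lambda>k. if k \<in> {1..N} then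
      u k + (\<Sum>i\<in>{1..m}. b i * (dt / dx * q k (rk_stage A q N dx dt t u i) (t + rk_node A i * dt)) *
          (rk_stage A q N dx dt t u i (prev_idx N k) - rk_stage A q N dx dt t u i k))
      else 0)"

fun rk_sol :: "(nat \<Rightarrow> nat \<Rightarrow> real) \<Rightarrow> (nat \<Rightarrow> real) \<Rightarrow> nat
                 \<Rightarrow> (nat \<Rightarrow> (nat \<Rightarrow> real) \<Rightarrow> real \<Rightarrow> real) \<Rightarrow> nat
                 \<Rightarrow> real \<Rightarrow> real \<Rightarrow> real \<Rightarrow> (nat \<Rightarrow> real) \<Rightarrow> nat \<Rightarrow> nat \<Rightarrow> real" where
  "rk_sol A b m q N dx dt t0 u0 0 = (\<lambda>k. if k \<in> {1..N} then u0 k else 0)"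
| "rk_sol A b m q N dx dt t0 u0 (Suc n) =
     rk_step A b m q N dx dt (t0 + real n * dt) (rk_sol A b m q N dx dt t0 u0 n)"

end

theory Submission imports Defs begin
declare inf_stage.simps[simp del] rk_stage.simps[simp del]

lemma inf_stage_eq: "inf_stage A xi u i l = u l + (\<Sum>j\<in>{1..<i}. A i j * xi j l *
        (inf_stage A xi u j (l - 1) - inf_stage A xi u j l))"
  using inf_stage.simps[of A xi u i] by simp

lemma rk_stage_eq: "rk_stage A q N dx dt t u i k = (if k \<in> {1..N} then
      u k + (\<Sum>j\<in>{1..<i}. A i j * (dt / dx * q k (rk_stage A q N dx dt t u j) (t + rk_node A j * dt)) *
          (rk_stage A q N dx dt t u j (prev_idx N k) - rk_stage A q N dx dt t u j k))
      else 0)"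
  using rk_stage.simps[of A q N dx dt t u i] by simp

lemma rk_stage_vec: "is_vec N (rk_stage A q N dx dt t u i)"
  unfolding is_vec_def by (simp add: rk_stage_eq)

definition per :: "nat \<Rightarrow> int \<Rightarrow> nat" where "per N l = nat ((l - 1) mod int N) + 1"

lemma per_range: "N \<ge> 1 \<Longrightarrow> per N l \<in> {1..N}"
proof -
  assume N: "N \<ge> 1"
  have "0 \<le> (l - 1) mod int N" "(l - 1) mod int N < int N" using N by auto
  then have "nat ((l - 1) mod int N) < N" by (simp add: nat_less_iff)
  then show ?thesis unfolding per_def by simp
qed

lemma per_int: "k \<in> {1..N} \<Longrightarrow> per N (int k) = k"
  unfolding per_def by (simp add: mod_pos_pos_trivial) arith

lemma prev_per: assumes "N \<ge> 1" shows "prev_idx N (per N l) = per N (l - 1)"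
proof -
  define r where "r = (l - 1) mod int N"
  have r: "0 \<le> r" "r < int N" using assms unfolding r_def by auto
  have e: "(l - 1 - 1) mod int N = (r - 1) mod int N" unfolding r_def by (simp add: mod_diff_left_eq)
  show ?thesis
  proof (cases "r = 0")
    case True
    have "(-1::int) mod int N = int N - 1" using assms by (simp add: zmod_minus1)
    then show ?thesis using True e assms unfolding per_def prev_idx_def r_def[symmetric] by (simp; arith)
  next
    case False
    then have "(r - 1) mod int N = r - 1" using r by (simp add: mod_pos_pos_trivial)
    then show ?thesis using False e r unfolding per_def prev_idx_def r_def[symmetric] by simp
  qed
qed

lemma nonneg_limit: fixes f :: "real \<Rightarrow> real" assumes "continuous_on UNIV f" "\<forall>t\<in>{0..<1}. 0 \<le> f t" shows "0 \<le> f 1"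
proof -
  have "isCont f 1" using assms(1) by (simp add: continuous_on_eq_continuous_at)
  then have "(f \<longlongrightarrow> f 1) (at_left 1)" by (simp add: filterlim_at_split isCont_def)
  moreover have "eventually (\<lambda>t. 0 \<le> f t) (at_left (1::real))"
    by (rule eventually_mono[OF eventually_at_left_real[of 0 1]]) (use assms(2) in auto)
  ultimately show ?thesis by (intro tendsto_lowerbound) auto
qed

lemma stage_local:
  "i \<ge> 1 \<Longrightarrow> (\<forall>s<i. u (l - int s) = v (l - int s)) \<Longrightarrow> (\<forall>j\<in>{1..<i}. \<forall>s<i. X j (l - int s) = Y j (l - int s))
   \<Longrightarrow> inf_stage A X u i l = inf_stage A Y v i l"
proof (induction i arbitrary: l rule: less_induct)
  case (less i)
  have eqs: "A i j * X j l * (inf_stage A X u j (l-1) - inf_stage A X u j l)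
      = A i j * Y j l * (inf_stage A Y v j (l-1) - inf_stage A Y v j l)" if j: "j\<in>{1..<i}" for j
  proof -
    have "X j l = Y j l" using less.prems(3) j by force
    moreover have "inf_stage A X u j (l-1) = inf_stage A Y v j (l-1)"
    proof (rule less.IH)
      show "j < i" "j \<ge> 1" using j by simp_all
      show "\<forall>s<j. u (l - 1 - int s) = v (l - 1 - int s)"
      proof (intro allI impI)
        fix s assume "s < j"
        then have "Suc s < i" using j by simp
        then have "u (l - int (Suc s)) = v (l - int (Suc s))" using less.prems(2) by blast
        then show "u (l - 1 - int s) = v (l - 1 - int s)" by (simp add: algebra_simps)
      qed
      show "\<forall>j'\<in>{1..<j}. \<forall>s<j. X j' (l - 1 - int s) = Y j' (l - 1 - int s)"
      proof (intro ballI allI impI)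
        fix j' s assume "j' \<in> {1..<j}" "s < j"
        then have "Suc s < i" "j' \<in> {1..<i}" using j by auto
        then have "X j' (l - int (Suc s)) = Y j' (l - int (Suc s))" using less.prems(3) by blast
        then show "X j' (l - 1 - int s) = Y j' (l - 1 - int s)" by (simp add: algebra_simps)
      qed
    qed
    moreover have "inf_stage A X u j l = inf_stage A Y v j l"
    proof (rule less.IH)
      show "j < i" "j \<ge> 1" using j by simp_all
      show "\<forall>s<j. u (l - int s) = v (l - int s)" using less.prems(2) j by auto
      show "\<forall>j'\<in>{1..<j}. \<forall>s<j. X j' (l - int s) = Y j' (l - int s)" using less.prems(3) j by auto
    qed
    ultimately show ?thesis by simp
  qed
  have "(\<Sum>j\<in>{1..<i}. A i j * X j l * (inf_stage A X u j (l-1) - inf_stage A X u j l))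
     = (\<Sum>j\<in>{1..<i}. A i j * Y j l * (inf_stage A Y v j (l-1) - inf_stage A Y v j l))"
    by (intro sum.cong refl eqs) auto
  moreover have "u l = v l" using less.prems(2)[rule_format, of 0] less.prems(1) by simp
  ultimately show ?case by (simp add: inf_stage_eq[of A X u i l] inf_stage_eq[of A Y v i l])
qed

lemma step_local:
  "(\<forall>s\<le>m. u (l - int s) = v (l - int s)) \<Longrightarrow> (\<forall>j\<in>{1..m}. \<forall>s\<le>m. X j (l - int s) = Y j (l - int s))
   \<Longrightarrow> inf_step A b m X u l = inf_step A b m Y v l"
proof -
  assume hu: "\<forall>s\<le>m. u (l - int s) = v (l - int s)" and hX: "\<forall>j\<in>{1..m}. \<forall>s\<le>m. X j (l - int s) = Y j (l - int s)"
  have eqs: "b i * X i l * (inf_stage A X u i (l-1) - inf_stage A X u i l)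
      = b i * Y i l * (inf_stage A Y v i (l-1) - inf_stage A Y v i l)" if i: "i \<in> {1..m}" for i
  proof -
    have "X i l = Y i l" using hX i by force
    moreover have "inf_stage A X u i (l-1) = inf_stage A Y v i (l-1)"
    proof (rule stage_local)
      show "i \<ge> 1" using i by simp
      show "\<forall>s<i. u (l - 1 - int s) = v (l - 1 - int s)"
      proof (intro allI impI)
        fix s assume "s < i"
        then have "Suc s \<le> m" using i by simp
        then have "u (l - int (Suc s)) = v (l - int (Suc s))" using hu by blast
        then show "u (l - 1 - int s) = v (l - 1 - int s)" by (simp add: algebra_simps)
      qed
      show "\<forall>j'\<in>{1..<i}. \<forall>s<i. X j' (l - 1 - int s) = Y j' (l - 1 - int s)"
      proof (intro ballI allI impI)
        fix j' s assume "j' \<in> {1..<i}" "s < i"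
        then have "Suc s \<le> m" "j' \<in> {1..m}" using i by auto
        then have "X j' (l - int (Suc s)) = Y j' (l - int (Suc s))" using hX by blast
        then show "X j' (l - 1 - int s) = Y j' (l - 1 - int s)" by (simp add: algebra_simps)
      qed
    qed
    moreover have "inf_stage A X u i l = inf_stage A Y v i l"
    proof (rule stage_local)
      show "i \<ge> 1" using i by simp
      show "\<forall>s<i. u (l - int s) = v (l - int s)" using hu i by auto
      show "\<forall>j'\<in>{1..<i}. \<forall>s<i. X j' (l - int s) = Y j' (l - int s)" using hX i by auto
    qed
    ultimately show ?thesis by simp
  qed
  have "(\<Sum>i\<in>{1..m}. b i * X i l * (inf_stage A X u i (l-1) - inf_stage A X u i l))
     = (\<Sum>i\<in>{1..m}. b i * Y i l * (inf_stage A Y v i (l-1) - inf_stage A Y v i l))"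
    by (intro sum.cong refl eqs) auto
  moreover have "u l = v l" using hu[rule_format, of 0] by simp
  ultimately show ?thesis unfolding inf_step_def by simp
qed

lemma stage_lin:
  "inf_stage A X (\<lambda>l. \<Sum>s\<in>S. c s * f s l) i l = (\<Sum>s\<in>S. c s * inf_stage A X (f s) i l)"
proof (induction i arbitrary: l rule: less_induct)
  case (less i)
  have "inf_stage A X (\<lambda>l. \<Sum>s\<in>S. c s * f s l) i l = (\<Sum>s\<in>S. c s * f s l) +
     (\<Sum>j\<in>{1..<i}. A i j * X j l * ((\<Sum>s\<in>S. c s * inf_stage A X (f s) j (l-1)) - (\<Sum>s\<in>S. c s * inf_stage A X (f s) j l)))"
    by (simp add: inf_stage_eq[of A X _ i l] less.IH)
  also have "\<dots> = (\<Sum>s\<in>S. c s * f s l) +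
     (\<Sum>j\<in>{1..<i}. \<Sum>s\<in>S. c s * (A i j * X j l * (inf_stage A X (f s) j (l-1) - inf_stage A X (f s) j l)))"
    by (simp add: sum_subtractf[symmetric] sum_distrib_left algebra_simps)
  also have "\<dots> = (\<Sum>s\<in>S. c s * f s l) +
     (\<Sum>s\<in>S. \<Sum>j\<in>{1..<i}. c s * (A i j * X j l * (inf_stage A X (f s) j (l-1) - inf_stage A X (f s) j l)))"
    by (subst sum.swap) simp
  also have "\<dots> = (\<Sum>s\<in>S. c s * inf_stage A X (f s) i l)"
    by (simp add: inf_stage_eq[of A X _ i l] sum.distrib sum_distrib_left algebra_simps)
  finally show ?case .
qed

lemma step_lin:
  "inf_step A b m X (\<lambda>l. \<Sum>s\<in>S. c s * f s l) l = (\<Sum>s\<in>S. c s * inf_step A b m X (f s) l)"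
proof -
  have "inf_step A b m X (\<lambda>l. \<Sum>s\<in>S. c s * f s l) l = (\<Sum>s\<in>S. c s * f s l) +
     (\<Sum>j\<in>{1..m}. b j * X j l * ((\<Sum>s\<in>S. c s * inf_stage A X (f s) j (l-1)) - (\<Sum>s\<in>S. c s * inf_stage A X (f s) j l)))"
    by (simp add: inf_step_def stage_lin)
  also have "\<dots> = (\<Sum>s\<in>S. c s * f s l) +
     (\<Sum>j\<in>{1..m}. \<Sum>s\<in>S. c s * (b j * X j l * (inf_stage A X (f s) j (l-1) - inf_stage A X (f s) j l)))"
    by (simp add: sum_subtractf[symmetric] sum_distrib_left algebra_simps)
  also have "\<dots> = (\<Sum>s\<in>S. c s * f s l) +
     (\<Sum>s\<in>S. \<Sum>j\<in>{1..m}. c s * (b j * X j l * (inf_stage A X (f s) j (l-1) - inf_stage A X (f s) j l)))"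
    by (subst sum.swap) simp
  also have "\<dots> = (\<Sum>s\<in>S. c s * inf_step A b m X (f s) l)"
    by (simp add: inf_step_def sum.distrib sum_distrib_left algebra_simps)
  finally show ?thesis .
qed

lemma stage_shift: "inf_stage A X u i (l + d) = inf_stage A (\<lambda>j l. X j (l + d)) (\<lambda>l. u (l + d)) i l"
proof (induction i arbitrary: l rule: less_induct)
  case (less i)
  have eqs: "A i j * X j (l + d) * (inf_stage A X u j (l + d - 1) - inf_stage A X u j (l + d))
     = A i j * X j (l + d) * (inf_stage A (\<lambda>j l. X j (l + d)) (\<lambda>l. u (l + d)) j (l - 1)
         - inf_stage A (\<lambda>j l. X j (l + d)) (\<lambda>l. u (l + d)) j l)" if "j \<in> {1..<i}" for j
    using less.IH[of j "l - 1"] less.IH[of j l] that by (simp add: algebra_simps)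
  show ?case
    by (simp add: inf_stage_eq[of A X u i "l + d"] inf_stage_eq[of A _ _ i l], intro sum.cong refl eqs) auto
qed

lemma step_shift: "inf_step A b m X u (l + d) = inf_step A b m (\<lambda>j l. X j (l + d)) (\<lambda>l. u (l + d)) l"
proof -
  have eqs: "b j * X j (l + d) * (inf_stage A X u j (l + d - 1) - inf_stage A X u j (l + d))
     = b j * X j (l + d) * (inf_stage A (\<lambda>j l. X j (l + d)) (\<lambda>l. u (l + d)) j (l - 1)
         - inf_stage A (\<lambda>j l. X j (l + d)) (\<lambda>l. u (l + d)) j l)" for j
    using stage_shift[of A X u j "l - 1" d] stage_shift[of A X u j l d] by (simp add: algebra_simps)
  show ?thesis unfolding inf_step_def by (simp add: eqs)
qed

lemma stage_const: "inf_stage A X (\<lambda>_. c) i l = c"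
proof (induction i arbitrary: l rule: less_induct)
  case (less i)
  then show ?case by (simp add: inf_stage_eq[of A X _ i l])
qed

lemma step_const: "inf_step A b m X (\<lambda>_. c) l = c"
  by (simp add: inf_step_def stage_const)

lemma stage_zero: "inf_stage A (\<lambda>j l. 0) u i l = u l"
  by (simp add: inf_stage_eq[of A "\<lambda>j l. 0" u i l])

lemma step_decomp: "inf_step A b m X w 0 = (\<Sum>s\<in>{0..m}. w (- int s) * pos_poly A b m X s)"
proof -
  define e where "e s = (\<lambda>l::int. if l = - int s then 1 else (0::real))" for s :: nat
  have "inf_step A b m X w 0 = inf_step A b m X (\<lambda>l. \<Sum>s\<in>{0..m}. w (- int s) * e s l) 0"
  proof (rule step_local)
    show "\<forall>s\<le>m. w (0 - int s) = (\<Sum>s'\<in>{0..m}. w (- int s') * e s' (0 - int s))"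
    proof (intro allI impI)
      fix s assume "s \<le> m"
      have "(\<Sum>s'\<in>{0..m}. w (- int s') * e s' (0 - int s)) = (\<Sum>s'\<in>{0..m}. if s' = s then w (- int s') else 0)"
        by (intro sum.cong refl) (auto simp: e_def)
      also have "\<dots> = w (- int s)" using \<open>s \<le> m\<close> by simp
      finally show "w (0 - int s) = (\<Sum>s'\<in>{0..m}. w (- int s') * e s' (0 - int s))" by simp
    qed
  qed simp
  also have "\<dots> = (\<Sum>s\<in>{0..m}. w (- int s) * inf_step A b m X (e s) 0)" by (rule step_lin)
  also have "\<dots> = (\<Sum>s\<in>{0..m}. w (- int s) * pos_poly A b m X s)"
    unfolding pos_poly_def e_def by simp
  finally show ?thesis .
qed

lemma stage_cont: "continuous_on UNIV (\<lambda>t::real. inf_stage A (\<lambda>j l. t * X j l) u i l)"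
proof (induction i arbitrary: l rule: less_induct)
  case (less i)
  have eq: "(\<lambda>t. inf_stage A (\<lambda>j l. t * X j l) u i l) = (\<lambda>t. u l + (\<Sum>j\<in>{1..<i}. A i j * (t * X j l) *
     (inf_stage A (\<lambda>j l. t * X j l) u j (l-1) - inf_stage A (\<lambda>j l. t * X j l) u j l)))"
    by (rule ext) (rule inf_stage_eq)
  show ?case unfolding eq by (intro continuous_intros less.IH) auto
qed

lemma step_cont: "continuous_on UNIV (\<lambda>t::real. inf_step A b m (\<lambda>j l. t * X j l) u l)"
  unfolding inf_step_def by (intro continuous_intros stage_cont)

lemma zero_in_S: "0 \<in> sscoef_set A b m"
  unfolding sscoef_set_def
proof (safe)
  fix xi :: "nat \<Rightarrow> int \<Rightarrow> real" and i
  assume h: "\<forall>j l. 0 \<le> xi j l \<and> xi j l \<le> 0"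
  then have "xi = (\<lambda>j l. 0)" by (intro ext) (meson order_antisym)
  then show "0 \<le> pos_poly A b m xi i"
    by (simp add: pos_poly_def inf_step_def stage_zero)
qed

lemma pos_nonneg:
  assumes hX: "\<forall>j l. 0 \<le> X j l \<and> ereal (X j l) \<le> step_size_coef A b m" and "s \<le> m"
  shows "0 \<le> pos_poly A b m X s"
proof -
  let ?S = "sscoef_set A b m"
  define W where "W = {1..m} \<times> {- int m..0}"
  define Xw where "Xw j l = (if (j, l) \<in> W then X j l else 0)" for j l
  define M where "M = Max ((\<lambda>(j, l). X j l) ` W \<union> {0})"
  have finW: "finite W" unfolding W_def by simp
  have Xw_le: "Xw j l \<le> M" for j l
  proof (cases "(j, l) \<in> W")
    case True
    then show ?thesis unfolding Xw_def M_def using finW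
      by (auto intro!: Max_ge)
  next
    case False
    then show ?thesis unfolding Xw_def M_def using finW by (auto intro!: Max_ge)
  qed
  have Xw_ge: "0 \<le> Xw j l" for j l using hX unfolding Xw_def by auto
  have M_le: "ereal M \<le> step_size_coef A b m"
  proof -
    have "M \<in> (\<lambda>(j, l). X j l) ` W \<union> {0}" unfolding M_def using finW by (intro Max_in) auto
    then show ?thesis
    proof
      assume "M \<in> (\<lambda>(j, l). X j l) ` W" then show ?thesis using hX by auto
    next
      assume "M \<in> {0}"
      then have "ereal M \<le> ereal (X 1 0)" using hX by auto
      also have "\<dots> \<le> step_size_coef A b m" using hX by auto
      finally show ?thesis .
    qed
  qed
  have M_ge: "0 \<le> M" unfolding M_def using finW by (intro Max_ge) auto
  have Sne: "?S \<noteq> {}" using zero_in_S by blast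
  have eq: "pos_poly A b m X s = pos_poly A b m Xw s"
    unfolding pos_poly_def by (rule step_local) (auto simp: Xw_def W_def)
  have "\<forall>t\<in>{0..<1}. 0 \<le> pos_poly A b m (\<lambda>j l. t * Xw j l) s"
  proof
    fix t :: real assume t: "t \<in> {0..<1}"
    obtain \<delta> where d: "\<delta> \<in> ?S" "t * M \<le> \<delta>"
    proof (cases "t * M = 0")
      case True then show ?thesis using that zero_in_S[of A b m] by auto
    next
      case False
      then have "0 < M" using M_ge t by auto
      then have "t * M < M" using t by auto
      then have "ereal (t * M) < ereal M" by simp
      also have "\<dots> \<le> Sup (ereal ` ?S)" using M_le Sne unfolding step_size_coef_def by simp
      finally have "ereal (t * M) < Sup (ereal ` ?S)" .
      then obtain a where "a \<in> ?S" "t * M < a" by (auto simp: less_Sup_iff)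
      then show ?thesis using that by auto
    qed
    have dd: "\<forall>xi. (\<forall>j l. 0 \<le> xi j l \<and> xi j l \<le> \<delta>) \<longrightarrow> (\<forall>i\<le>m. 0 \<le> pos_poly A b m xi i)"
      using d(1) unfolding sscoef_set_def by simp
    have bnd: "\<forall>j l. 0 \<le> t * Xw j l \<and> t * Xw j l \<le> \<delta>"
    proof (intro allI conjI)
      fix j l
      show "0 \<le> t * Xw j l" using t Xw_ge by simp
      have "t * Xw j l \<le> t * M" using t Xw_le by (intro mult_left_mono) auto
      then show "t * Xw j l \<le> \<delta>" using d by simp
    qed
    show "0 \<le> pos_poly A b m (\<lambda>j l. t * Xw j l) s"
      using mp[OF spec[OF dd, of "\<lambda>j l. t * Xw j l"] bnd] \<open>s \<le> m\<close> by blast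
  qed
  then have "0 \<le> pos_poly A b m (\<lambda>j l. 1 * Xw j l) s"
    using nonneg_limit[of "\<lambda>t. pos_poly A b m (\<lambda>j l. t * Xw j l) s"]
    unfolding pos_poly_def using step_cont by blast
  then show ?thesis using eq by simp
qed

definition pxi where
  "pxi A q N dx dt t u = (\<lambda>j l. dt * q (per N l) (rk_stage A q N dx dt t u j) (t + rk_node A j * dt) / dx)"

lemma stage_per:
  assumes "N \<ge> 1"
  shows "inf_stage A (pxi A q N dx dt t u) (\<lambda>l. u (per N l)) i l = rk_stage A q N dx dt t u i (per N l)"
proof (induction i arbitrary: l rule: less_induct)
  case (less i)
  have eqs: "A i j * pxi A q N dx dt t u j l * (inf_stage A (pxi A q N dx dt t u) (\<lambda>l. u (per N l)) j (l - 1)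
        - inf_stage A (pxi A q N dx dt t u) (\<lambda>l. u (per N l)) j l)
     = A i j * (dt / dx * q (per N l) (rk_stage A q N dx dt t u j) (t + rk_node A j * dt)) *
          (rk_stage A q N dx dt t u j (prev_idx N (per N l)) - rk_stage A q N dx dt t u j (per N l))"
    if "j \<in> {1..<i}" for j
    using less.IH[of j "l - 1"] less.IH[of j l] that prev_per[OF assms, of l]
    by (simp add: pxi_def)
  have R: "rk_stage A q N dx dt t u i (per N l) = u (per N l) + (\<Sum>j\<in>{1..<i}. A i j * (dt / dx * q (per N l) (rk_stage A q N dx dt t u j) (t + rk_node A j * dt)) *
          (rk_stage A q N dx dt t u j (prev_idx N (per N l)) - rk_stage A q N dx dt t u j (per N l)))"
    unfolding rk_stage_eq[of A q N dx dt t u i "per N l"] using per_range[OF assms, of l] by (rule if_P)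
  show ?case unfolding R inf_stage_eq[of A _ _ i l]
    by (intro arg_cong[where f="\<lambda>x. u (per N l) + x"] sum.cong refl eqs) auto
qed

lemma step_per:
  assumes "N \<ge> 1" "k \<in> {1..N}"
  shows "rk_step A b m q N dx dt t u k = inf_step A b m (pxi A q N dx dt t u) (\<lambda>l. u (per N l)) (int k)"
proof -
  have pk: "per N (int k) = k" using assms(2) by (rule per_int)
  have pv: "prev_idx N k = per N (int k - 1)" using prev_per[OF assms(1), of "int k"] pk by simp
  have eqs: "b i * (dt / dx * q k (rk_stage A q N dx dt t u i) (t + rk_node A i * dt)) *
          (rk_stage A q N dx dt t u i (prev_idx N k) - rk_stage A q N dx dt t u i k)
     = b i * pxi A q N dx dt t u i (int k) * (inf_stage A (pxi A q N dx dt t u) (\<lambda>l. u (per N l)) i (int k - 1)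
        - inf_stage A (pxi A q N dx dt t u) (\<lambda>l. u (per N l)) i (int k))" for i
    using stage_per[OF assms(1), of A q dx dt t u i "int k"] stage_per[OF assms(1), of A q dx dt t u i "int k - 1"] pk pv
    by (simp add: pxi_def)
  show ?thesis unfolding rk_step_def inf_step_def if_P[OF assms(2)] pk
    by (intro arg_cong[where f="\<lambda>x. u k + x"] sum.cong refl eqs)
qed

lemma step_bound:
  assumes N1: "N \<ge> 1"
    and hq: "\<forall>k\<in>{1..N}. \<forall>u t. is_vec N u \<longrightarrow>
           0 \<le> dt * q k u t / dx \<and> ereal (dt * q k u t / dx) \<le> step_size_coef A b m"
    and hu: "\<forall>k\<in>{1..N}. mn \<le> u k \<and> u k \<le> mx"
    and k: "k \<in> {1..N}"
  shows "mn \<le> rk_step A b m q N dx dt t u k \<and> rk_step A b m q N dx dt t u k \<le> mx"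
proof -
  define X where "X = (\<lambda>j l. pxi A q N dx dt t u j (l + int k))"
  define w where "w = (\<lambda>l. u (per N (l + int k)))"
  define P where "P s = pos_poly A b m X s" for s
  have "rk_step A b m q N dx dt t u k = inf_step A b m (pxi A q N dx dt t u) (\<lambda>l. u (per N l)) (0 + int k)"
    using step_per[OF N1 k] by simp
  also have "\<dots> = inf_step A b m X w 0" unfolding X_def w_def by (rule step_shift)
  also have "\<dots> = (\<Sum>s\<in>{0..m}. w (- int s) * P s)" unfolding P_def by (rule step_decomp)
  finally have r: "rk_step A b m q N dx dt t u k = (\<Sum>s\<in>{0..m}. w (- int s) * P s)" .
  have "1 = inf_step A b m X (\<lambda>_. 1) 0" by (simp add: step_const)
  also have "\<dots> = (\<Sum>s\<in>{0..m}. 1 * P s)" unfolding P_def by (rule step_decomp)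
  finally have one: "(\<Sum>s\<in>{0..m}. P s) = 1" by simp
  have Xb: "\<forall>j l. 0 \<le> X j l \<and> ereal (X j l) \<le> step_size_coef A b m"
    using hq per_range[OF N1] rk_stage_vec unfolding X_def pxi_def by blast
  have Pn: "0 \<le> P s" if "s \<in> {0..m}" for s
    unfolding P_def using pos_nonneg[OF Xb] that by simp
  have wb: "mn \<le> w l \<and> w l \<le> mx" for l using hu per_range[OF N1] unfolding w_def by blast
  have "mn = (\<Sum>s\<in>{0..m}. mn * P s)" using one by (simp add: sum_distrib_left[symmetric])
  also have "\<dots> \<le> (\<Sum>s\<in>{0..m}. w (- int s) * P s)"
    by (intro sum_mono mult_right_mono) (use wb Pn in auto)
  finally have lo: "mn \<le> (\<Sum>s\<in>{0..m}. w (- int s) * P s)" .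
  have "(\<Sum>s\<in>{0..m}. w (- int s) * P s) \<le> (\<Sum>s\<in>{0..m}. mx * P s)"
    by (intro sum_mono mult_right_mono) (use wb Pn in auto)
  also have "\<dots> = mx" using one by (simp add: sum_distrib_left[symmetric])
  finally show ?thesis using lo r by simp
qed

theorem theorem1:
  fixes A :: "nat \<Rightarrow> nat \<Rightarrow> real" and b :: "nat \<Rightarrow> real" and m :: nat
    and q :: "nat \<Rightarrow> (nat \<Rightarrow> real) \<Rightarrow> real \<Rightarrow> real"
    and N :: nat and dx dt t0 :: real and u0 :: "nat \<Rightarrow> real"
  assumes "N \<ge> 1" and "dx > 0"
    and "\<forall>k\<in>{1..N}. \<forall>u t. is_vec N u \<longrightarrow>
           0 \<le> dt * q k u t / dx \<and> ereal (dt * q k u t / dx) \<le> step_size_coef A b m"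
  shows "\<forall>n. \<forall>k\<in>{1..N}.
           Min (u0 ` {1..N}) \<le> rk_sol A b m q N dx dt t0 u0 n k \<and>
           rk_sol A b m q N dx dt t0 u0 n k \<le> Max (u0 ` {1..N})"
proof
  fix n show "\<forall>k\<in>{1..N}. Min (u0 ` {1..N}) \<le> rk_sol A b m q N dx dt t0 u0 n k \<and>
           rk_sol A b m q N dx dt t0 u0 n k \<le> Max (u0 ` {1..N})"
  proof (induction n)
    case 0
    then show ?case by (auto intro: Min_le Max_ge)
  next
    case (Suc n)
    show ?case
      using step_bound[OF assms(1) assms(3) Suc] by simp
  qed
qed

end
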